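(* Let $\alpha,t,n$ be positive integers and let $\mathcal{C}_W$ be a binary $t$-write WOM code on $n$ cells with encoders $\mathcal{E}^W_1,\ldots,\mathcal{E}^W_t$ and sum-rate $R_{\mathrm{sum}}$. Define the code $\mathcal{C}_{\alpha,1,1}$ on $n$ cells, starting from $\mathbf{c}_0=\mathbf{0}$, as follows: for the $i$-th write ($i\ge1$) let $i'=i\bmod 2(t+\alpha)\in\{1,\ldots,2(t+\alpha)\}$ and let $\mathbf{c}_i$ be the state after the $i$-th write. If $i'\in[1:t]$, a message $M\in[1:2^{nR_{i'}}]$ is written by $\mathbf{c}_i=\mathcal{E}^W_{i'}(M,\mathbf{c}_{i-1})$; if $i'=t+1$, no information is written and $\mathbf{c}_i=\mathbf{1}$ (all-one vector); if $i'\in[t+2:t+\alpha]$, no information is written and $\mathbf{c}_i=\mathbf{c}_{i-1}$; if $i'\in[t+\alpha+1:2t+\alpha]$, a message $M\in[1:2^{nR_{i'-t-\alpha}}]$ is written by $\mathbf{c}_i=\overline{\mathcal{E}^W_{i'-t-\alpha}(M,\overline{\mathbf{c}_{i-1}})}$; if $i'=2t+\alpha+1$, no information is written and $\mathbf{c}_i=\mathbf{0}$; if $i'\in[2t+\alpha+2:2(t+\alpha)]$, no information is written and $\mathbf{c}_i=\mathbf{c}_{i-1}$. Then $\mathcal{C}_{\alpha,1,1}$ is an $(\alpha,1,1)$-constrained code, and if $R_{\mathrm{sum}}=\log_2(t+1)$ (i.e. $\mathcal{C}_W$ is sum-rate optimal), then the rate of $\mathcal{C}_{\alpha,1,1}$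 is $\frac{\log_2(t+1)}{t+\alpha}$.
   Context: Convention: $x\bmod y$ is taken in $\{1,\ldots,y\}$; $[a:b]=\{a,\ldots,b\}$; $[1:2^{nR}]=\{1,\ldots,\lfloor2^{nR}\rfloor\}$; $\overline{\mathbf{u}}$ is the bitwise complement. A binary $t$-write WOM (write-once memory) code $[n,t;2^{nR_1},\ldots,2^{nR_t}]$ consists of encoders $\mathcal{E}^W_j:[1:2^{nR_j}]\times\{0,1\}^n\to\{0,1\}^n$ and decoders $\mathcal{D}^W_j:\{0,1\}^n\to[1:2^{nR_j}]$, $j=1,\ldots,t$, such that $\mathbf{c}\le\mathcal{E}^W_j(m,\mathbf{c})$ componentwise (cells only change from 0 to 1) and $\mathcal{D}^W_j(\mathcal{E}^W_j(m,\mathbf{c}))=m$; its sum-rate is $R_{\mathrm{sum}}=\sum_{j=1}^tR_j$. A code on $n$ binary cells consists, for each write $i\ge1$, of a real $R_i\ge0$, an encoder $\mathcal{E}_i:[1:2^{nR_i}]\times\{0,1\}^n\to\{0,1\}^n$ and decoder $\mathcal{D}_i$ with $\mathcal{D}_i(\mathcal{E}_i(m,\mathbf{u}))=m$ (both may depend on $i$; writes with no information have one message, $R_i=0$). Starting from the zero state, messages produce states $\mathbf{v}_i$. The code is $(\alpha,\beta,p)$-constrained if for every message sequence, every $i\ge0$ and every $1\le j\le n-\beta+1$, $|\{(k,\ell): v_{i+k,j+\ell}\ne v_{i+k+1,j+\ell}, 0\le k<\alpha, 0\le\ell<\beta\}|\le p$. Rate: $\lim_{m\to\infty}\frac1m\sum_{i=1}^mR_i$.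 *)

theory Defs
  imports Complex_Main
begin

text \<open>Cell states on n binary cells are boolean lists of length n (False = 0, True = 1).
  Bit positions are 0-indexed in the list.\<close>

definition msgs :: "nat \<Rightarrow> real \<Rightarrow> nat set" where
  "msgs n R = {1 .. nat \<lfloor>2 powr (real n * R)\<rfloor>}"

fun wom_before :: "nat \<Rightarrow> (nat \<Rightarrow> real) \<Rightarrow> (nat \<Rightarrow> nat \<Rightarrow> bool list \<Rightarrow> bool list)
                     \<Rightarrow> nat \<Rightarrow> bool list set" where
  "wom_before n R E 0 = {replicate n False}"
| "wom_before n R E (Suc j) =
     {E (Suc j) m c | m c. m \<in> msgs n (R (Suc j)) \<and> c \<in> wom_before n R E j}"

definition wom_code :: "nat \<Rightarrow> nat \<Rightarrow> (nat \<Rightarrow> real) \<Rightarrow> (nat \<Rightarrow> nat \<Rightarrow> bool list \<Rightarrow> bool list)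
                         \<Rightarrow> (nat \<Rightarrow> bool list \<Rightarrow> nat) \<Rightarrow> bool" where
  "wom_code n t R E D \<longleftrightarrow>
     (\<forall>j\<in>{1..t}. R j \<ge> 0 \<and>
        (\<forall>m\<in>msgs n (R j). \<forall>c\<in>wom_before n R E (j - 1).
            list_all2 (\<le>) c (E j m c) \<and> D j (E j m c) = m))"

definition sum_rate :: "nat \<Rightarrow> (nat \<Rightarrow> real) \<Rightarrow> real" where
  "sum_rate t R = (\<Sum>j=1..t. R j)"

primrec code_state :: "nat \<Rightarrow> (nat \<Rightarrow> nat \<Rightarrow> bool list \<Rightarrow> bool list) \<Rightarrow> (nat \<Rightarrow> nat)
                        \<Rightarrow> nat \<Rightarrow> bool list" where
  "code_state n E ms 0 = replicate n False"
| "code_state n E ms (Suc i) = E (Suc i) (ms (Suc i)) (code_state n E ms i)"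

definition valid_msgs :: "nat \<Rightarrow> (nat \<Rightarrow> real) \<Rightarrow> (nat \<Rightarrow> nat) \<Rightarrow> bool" where
  "valid_msgs n R ms \<longleftrightarrow> (\<forall>i\<ge>1. ms i \<in> msgs n (R i))"

definition is_code :: "nat \<Rightarrow> (nat \<Rightarrow> real) \<Rightarrow> (nat \<Rightarrow> nat \<Rightarrow> bool list \<Rightarrow> bool list)
                        \<Rightarrow> (nat \<Rightarrow> bool list \<Rightarrow> nat) \<Rightarrow> bool" where
  "is_code n R E D \<longleftrightarrow> (\<forall>i\<ge>1. R i \<ge> 0) \<and>
     (\<forall>ms. valid_msgs n R ms \<longrightarrow>
        (\<forall>i\<ge>1. length (code_state n E ms i) = n \<and> D i (code_state n E ms i) = ms i))"

text \<open>(alpha,beta,p)-constrained code; cell j (1-indexed) is list position j - 1.\<close>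
definition constrained_code :: "nat \<Rightarrow> (nat \<Rightarrow> real) \<Rightarrow> (nat \<Rightarrow> nat \<Rightarrow> bool list \<Rightarrow> bool list)
       \<Rightarrow> (nat \<Rightarrow> bool list \<Rightarrow> nat) \<Rightarrow> nat \<Rightarrow> nat \<Rightarrow> nat \<Rightarrow> bool" where
  "constrained_code n R E D \<alpha> \<beta> p \<longleftrightarrow> is_code n R E D \<and>
     (\<forall>ms. valid_msgs n R ms \<longrightarrow>
        (\<forall>i j. 1 \<le> j \<and> j + \<beta> \<le> n + 1 \<longrightarrow>
           card {(k, l). k < \<alpha> \<and> l < \<beta> \<and>
                  code_state n E ms (i + k) ! (j + l - 1) \<noteq> code_state n E ms (i + k + 1) ! (j + l - 1)}
           \<le> p))"

definition code_rate :: "(nat \<Rightarrow> real) \<Rightarrow> real \<Rightarrow> bool" where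
  "code_rate R L \<longleftrightarrow> (\<lambda>m. (\<Sum>i=1..m. R i) / real m) \<longlonglongrightarrow> L"

definition cidx :: "nat \<Rightarrow> nat \<Rightarrow> nat \<Rightarrow> nat" where
  "cidx t \<alpha> i = (if i mod (2 * (t + \<alpha>)) = 0 then 2 * (t + \<alpha>) else i mod (2 * (t + \<alpha>)))"

definition constr_R :: "nat \<Rightarrow> nat \<Rightarrow> (nat \<Rightarrow> real) \<Rightarrow> nat \<Rightarrow> real" where
  "constr_R t \<alpha> R i = (let i' = cidx t \<alpha> i in
     if 1 \<le> i' \<and> i' \<le> t then R i'
     else if t + \<alpha> + 1 \<le> i' \<and> i' \<le> 2 * t + \<alpha> then R (i' - t - \<alpha>)
     else 0)"

definition constr_E :: "nat \<Rightarrow> nat \<Rightarrow> nat \<Rightarrow> (nat \<Rightarrow> nat \<Rightarrow> bool list \<Rightarrow> bool list)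
                          \<Rightarrow> nat \<Rightarrow> nat \<Rightarrow> bool list \<Rightarrow> bool list" where
  "constr_E n t \<alpha> E i m u = (let i' = cidx t \<alpha> i in
     if 1 \<le> i' \<and> i' \<le> t then E i' m u
     else if i' = t + 1 then replicate n True
     else if t + 2 \<le> i' \<and> i' \<le> t + \<alpha> then u
     else if t + \<alpha> + 1 \<le> i' \<and> i' \<le> 2 * t + \<alpha> then map Not (E (i' - t - \<alpha>) m (map Not u))
     else if i' = 2 * t + \<alpha> + 1 then replicate n False
     else u)"

definition constr_D :: "nat \<Rightarrow> nat \<Rightarrow> (nat \<Rightarrow> bool list \<Rightarrow> nat) \<Rightarrow> nat \<Rightarrow> bool list \<Rightarrow> nat" where
  "constr_D t \<alpha> D i v = (let i' = cidx t \<alpha> i in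
     if 1 \<le> i' \<and> i' \<le> t then D i' v
     else if t + \<alpha> + 1 \<le> i' \<and> i' \<le> 2 * t + \<alpha> then D (i' - t - \<alpha>) (map Not v)
     else 1)"

end

theory Submission
  imports Defs
begin


lemma cidx_ge1: "0 < \<alpha> \<Longrightarrow> 1 \<le> cidx t \<alpha> i"
  unfolding cidx_def by auto
lemma cidx_le: "0 < \<alpha> \<Longrightarrow> cidx t \<alpha> i \<le> 2*(t+\<alpha>)"
  unfolding cidx_def by (auto intro: order.strict_implies_order)
lemma cidx_0: "cidx t \<alpha> 0 = 2*(t+\<alpha>)"
  unfolding cidx_def by simp
lemma cidx_Suc: "0 < \<alpha> \<Longrightarrow> cidx t \<alpha> (Suc i) = (if cidx t \<alpha> i = 2*(t+\<alpha>) then 1 else Suc (cidx t \<alpha> i))"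
proof -
  assume a: "0 < \<alpha>"
  have b: "i mod (2*t+2*\<alpha>) < 2*t+2*\<alpha>" using a by simp
  show ?thesis unfolding cidx_def using a by (auto simp: mod_Suc) (metis b less_irrefl_nat)
qed
lemma cidx_add: "0 < \<alpha> \<Longrightarrow> cidx t \<alpha> i + d \<le> 2*(t+\<alpha>) \<Longrightarrow> cidx t \<alpha> (i+d) = cidx t \<alpha> i + d"
  by (induction d) (auto simp: cidx_Suc)
lemma cidx_period: "cidx t \<alpha> (i + 2*(t+\<alpha>)) = cidx t \<alpha> i"
  unfolding cidx_def by simp
lemma cidx_small: "1 \<le> i \<Longrightarrow> i \<le> 2*(t+\<alpha>) \<Longrightarrow> cidx t \<alpha> i = i"
  unfolding cidx_def
  by (cases "i = 2*(t+\<alpha>)") auto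


lemma WB_Suc_intro: "m \<in> msgs n (R (Suc j)) \<Longrightarrow> c \<in> wom_before n R E j \<Longrightarrow> E (Suc j) m c \<in> wom_before n R E (Suc j)"
  by auto

lemma msgs_0: "msgs n 0 = {1}"
  unfolding msgs_def by simp

locale cons =
  fixes \<alpha> t n :: nat and R :: "nat \<Rightarrow> real"
    and E :: "nat \<Rightarrow> nat \<Rightarrow> bool list \<Rightarrow> bool list"
    and D :: "nat \<Rightarrow> bool list \<Rightarrow> nat"
  assumes apos: "0 < \<alpha>" and tpos: "0 < t" and npos: "0 < n"
    and wom: "wom_code n t R E D"
begin

abbreviation "WB \<equiv> wom_before n R E"
abbreviation "ci \<equiv> cidx t \<alpha>"
abbreviation "CE \<equiv> constr_E n t \<alpha> E"
abbreviation "CR \<equiv> constr_R t \<alpha> R"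
abbreviation "CD \<equiv> constr_D t \<alpha> D"

lemma wom_step: "1 \<le> j \<Longrightarrow> j \<le> t \<Longrightarrow> m \<in> msgs n (R j) \<Longrightarrow> c \<in> WB (j - 1) \<Longrightarrow>
   list_all2 (\<le>) c (E j m c) \<and> D j (E j m c) = m"
  using wom unfolding wom_code_def by auto

lemma R_nonneg: "1 \<le> j \<Longrightarrow> j \<le> t \<Longrightarrow> R j \<ge> 0"
  using wom unfolding wom_code_def by auto

lemma WB_len: "j \<le> t \<Longrightarrow> v \<in> WB j \<Longrightarrow> length v = n"
proof (induction j arbitrary: v)
  case 0 then show ?case by simp
next
  case (Suc j)
  then obtain m c where v: "v = E (Suc j) m c" and m: "m \<in> msgs n (R (Suc j))" and c: "c \<in> WB j" by auto
  have "list_all2 (\<le>) c v" using wom_step[of "Suc j" m c] Suc.prems m c v by auto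
  then show ?case using Suc.IH[of c] Suc.prems c list_all2_lengthD by fastforce
qed

definition INV :: "nat \<Rightarrow> bool list \<Rightarrow> bool" where
  "INV c v \<longleftrightarrow> (c \<le> t \<longrightarrow> v \<in> WB c) \<and> (t < c \<and> c \<le> t+\<alpha> \<longrightarrow> v = replicate n True)
     \<and> (t+\<alpha> < c \<and> c \<le> 2*t+\<alpha> \<longrightarrow> map Not v \<in> WB (c - t - \<alpha>))
     \<and> (2*t+\<alpha> < c \<longrightarrow> v = replicate n False)"

lemma prev:
  assumes "INV (ci i) v"
  shows "1 \<le> ci (Suc i) \<and> ci (Suc i) \<le> t \<Longrightarrow> v \<in> WB (ci (Suc i) - 1)"
    and "t+\<alpha>+1 \<le> ci (Suc i) \<and> ci (Suc i) \<le> 2*t+\<alpha> \<Longrightarrow> map Not v \<in> WB (ci (Suc i) - t - \<alpha> - 1)"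
    and "t+2 \<le> ci (Suc i) \<and> ci (Suc i) \<le> t+\<alpha> \<Longrightarrow> v = replicate n True"
    and "2*t+\<alpha>+2 \<le> ci (Suc i) \<Longrightarrow> v = replicate n False"
proof -
  have c1: "1 \<le> ci i" and cP: "ci i \<le> 2*(t+\<alpha>)" using cidx_ge1 cidx_le apos by auto
  have cs: "ci (Suc i) = (if ci i = 2*(t+\<alpha>) then 1 else Suc (ci i))" using cidx_Suc apos by blast
  show "1 \<le> ci (Suc i) \<and> ci (Suc i) \<le> t \<Longrightarrow> v \<in> WB (ci (Suc i) - 1)"
  proof -
    assume h: "1 \<le> ci (Suc i) \<and> ci (Suc i) \<le> t"
    show ?thesis
    proof (cases "ci i = 2*(t+\<alpha>)")
      case True
      then have "v = replicate n False" using assms apos unfolding INV_def by auto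
      then show ?thesis using True cs by simp
    next
      case False
      then show ?thesis using assms h cs unfolding INV_def by auto
    qed
  qed
  show "t+\<alpha>+1 \<le> ci (Suc i) \<and> ci (Suc i) \<le> 2*t+\<alpha> \<Longrightarrow> map Not v \<in> WB (ci (Suc i) - t - \<alpha> - 1)"
  proof -
    assume h: "t+\<alpha>+1 \<le> ci (Suc i) \<and> ci (Suc i) \<le> 2*t+\<alpha>"
    then have ne: "ci i \<noteq> 2*(t+\<alpha>)" and cs': "ci (Suc i) = Suc (ci i)" using cs by auto
    show ?thesis
    proof (cases "ci i = t+\<alpha>")
      case True
      then have "v = replicate n True" using assms apos tpos unfolding INV_def by auto
      then show ?thesis using True cs' by (simp add: comp_def)
    next
      case False
      then show ?thesis using assms h cs' unfolding INV_def by auto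
    qed
  qed
  show "t+2 \<le> ci (Suc i) \<and> ci (Suc i) \<le> t+\<alpha> \<Longrightarrow> v = replicate n True"
    using assms cs unfolding INV_def by (auto split: if_splits)
  show "2*t+\<alpha>+2 \<le> ci (Suc i) \<Longrightarrow> v = replicate n False"
    using assms cs unfolding INV_def by (auto split: if_splits)
qed

end

context cons begin

lemma CE_A: "1 \<le> ci i \<Longrightarrow> ci i \<le> t \<Longrightarrow> CE i m u = E (ci i) m u"
  using apos unfolding constr_E_def by (auto simp add: Let_def)
lemma CE_t1: "ci i = t+1 \<Longrightarrow> CE i m u = replicate n True"
  using apos unfolding constr_E_def by (auto simp add: Let_def)
lemma CE_keep: "(t+2 \<le> ci i \<and> ci i \<le> t+\<alpha>) \<or> 2*t+\<alpha>+2 \<le> ci i \<Longrightarrow> CE i m u = u"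
  using apos unfolding constr_E_def by (auto simp add: Let_def)
lemma CE_B: "t+\<alpha>+1 \<le> ci i \<Longrightarrow> ci i \<le> 2*t+\<alpha> \<Longrightarrow> CE i m u = map Not (E (ci i - t - \<alpha>) m (map Not u))"
  using apos unfolding constr_E_def by (auto simp add: Let_def)
lemma CE_z: "ci i = 2*t+\<alpha>+1 \<Longrightarrow> CE i m u = replicate n False"
  using apos unfolding constr_E_def by (auto simp add: Let_def)
lemma CR_A: "1 \<le> ci i \<Longrightarrow> ci i \<le> t \<Longrightarrow> CR i = R (ci i)"
  using apos unfolding constr_R_def by (auto simp add: Let_def)
lemma CR_B: "t+\<alpha>+1 \<le> ci i \<Longrightarrow> ci i \<le> 2*t+\<alpha> \<Longrightarrow> CR i = R (ci i - t - \<alpha>)"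
  using apos unfolding constr_R_def by (auto simp add: Let_def)
lemma CR_0: "\<not> (1 \<le> ci i \<and> ci i \<le> t) \<Longrightarrow> \<not> (t+\<alpha>+1 \<le> ci i \<and> ci i \<le> 2*t+\<alpha>) \<Longrightarrow> CR i = 0"
  using apos unfolding constr_R_def by (auto simp add: Let_def)
lemma CD_A: "1 \<le> ci i \<Longrightarrow> ci i \<le> t \<Longrightarrow> CD i v = D (ci i) v"
  using apos unfolding constr_D_def by (auto simp add: Let_def)
lemma CD_B: "t+\<alpha>+1 \<le> ci i \<Longrightarrow> ci i \<le> 2*t+\<alpha> \<Longrightarrow> CD i v = D (ci i - t - \<alpha>) (map Not v)"
  using apos unfolding constr_D_def by (auto simp add: Let_def)
lemma CD_0: "\<not> (1 \<le> ci i \<and> ci i \<le> t) \<Longrightarrow> \<not> (t+\<alpha>+1 \<le> ci i \<and> ci i \<le> 2*t+\<alpha>) \<Longrightarrow> CD i v = 1"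
  using apos unfolding constr_D_def by (auto simp add: Let_def)

lemma msg_in: "valid_msgs n CR ms \<Longrightarrow> ms (Suc i) \<in> msgs n (CR (Suc i))"
  unfolding valid_msgs_def by auto

lemma inv: "valid_msgs n CR ms \<Longrightarrow> INV (ci i) (code_state n CE ms i)"
proof (induction i)
  case 0 then show ?case using apos by (simp add: INV_def cidx_0)
next
  case (Suc i)
  define v where "v = code_state n CE ms i"
  define c where "c = ci (Suc i)"
  define m where "m = ms (Suc i)"
  have IV: "INV (ci i) v" using Suc v_def by simp
  have m: "m \<in> msgs n (CR (Suc i))" using msg_in Suc.prems m_def by blast
  have st: "code_state n CE ms (Suc i) = CE (Suc i) m v" by (simp add: v_def m_def)
  have c1: "1 \<le> c" and cP: "c \<le> 2*(t+\<alpha>)" using cidx_ge1 cidx_le apos c_def by auto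
  consider "c \<le> t" | "c = t+1" | "t+2 \<le> c \<and> c \<le> t+\<alpha>" | "t+\<alpha>+1 \<le> c \<and> c \<le> 2*t+\<alpha>"
    | "c = 2*t+\<alpha>+1" | "2*t+\<alpha>+2 \<le> c" by linarith
  then show ?case
  proof cases
    case 1
    have vW: "v \<in> WB (c - 1)" using prev(1)[OF IV] 1 c1 c_def by blast
    have mR: "m \<in> msgs n (R (Suc (c-1)))" using m 1 c1 CR_A c_def by simp
    have "E (Suc (c-1)) m v \<in> WB (Suc (c-1))" by (rule WB_Suc_intro[OF mR vW])
    then have "E c m v \<in> WB c" using c1 by simp
    then show ?thesis using st 1 c1 CE_A unfolding INV_def c_def by simp
  next
    case 2
    then show ?thesis using st c1 CE_t1 apos unfolding INV_def c_def by simp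
  next
    case 3
    have "v = replicate n True" using prev(3)[OF IV] 3 c_def by blast
    then show ?thesis using st 3 c1 CE_keep unfolding INV_def c_def by simp
  next
    case 4
    define j where "j = c - t - \<alpha>"
    have j1: "1 \<le> j" "j \<le> t" using 4 j_def by auto
    have vW: "map Not v \<in> WB (j - 1)" using prev(2)[OF IV] 4 c_def j_def by (simp add: diff_diff_add)
    have mR0: "m \<in> msgs n (R j)" using m 4 j1 CR_B c_def j_def by simp
    have "Suc (j-1) = j" using j1 by simp
    then have mR: "m \<in> msgs n (R (Suc (j-1)))" using mR0 by simp
    have "E (Suc (j-1)) m (map Not v) \<in> WB (Suc (j-1))" by (rule WB_Suc_intro[OF mR vW])
    then have W: "E j m (map Not v) \<in> WB j" using j1 by simp
    have "CE (Suc i) m v = map Not (E j m (map Not v))"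
      using 4 CE_B c_def j_def by simp
    then show ?thesis using st 4 W unfolding INV_def j_def by (simp add: comp_def c_def)
  next
    case 5
    then show ?thesis using st c1 CE_z unfolding INV_def c_def by simp
  next
    case 6
    have "v = replicate n False" using prev(4)[OF IV] 6 c_def by blast
    then show ?thesis using st 6 c1 CE_keep unfolding INV_def c_def by simp
  qed
qed

end

context cons begin

abbreviation "st ms i \<equiv> code_state n CE ms i"

lemma INV_len: "INV c v \<Longrightarrow> 1 \<le> c \<Longrightarrow> length v = n"
proof -
  assume a: "INV c v" "1 \<le> c"
  consider "c \<le> t" | "t < c \<and> c \<le> t+\<alpha>" | "t+\<alpha> < c \<and> c \<le> 2*t+\<alpha>" | "2*t+\<alpha> < c" by linarith
  then show ?thesis
  proof cases
    case 1 then show ?thesis using a WB_len unfolding INV_def by blast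
  next
    case 2 then show ?thesis using a unfolding INV_def by simp
  next
    case 3
    then have "map Not v \<in> WB (c - t - \<alpha>)" "c - t - \<alpha> \<le> t" using a unfolding INV_def by auto
    then show ?thesis using WB_len by fastforce
  next
    case 4 then show ?thesis using a unfolding INV_def by simp
  qed
qed

lemma st_len: "valid_msgs n CR ms \<Longrightarrow> length (st ms i) = n"
  using INV_len inv cidx_ge1 apos by blast

lemma decode: "valid_msgs n CR ms \<Longrightarrow> CD (Suc i) (st ms (Suc i)) = ms (Suc i)"
proof -
  assume vm: "valid_msgs n CR ms"
  define v where "v = st ms i"
  define c where "c = ci (Suc i)"
  define m where "m = ms (Suc i)"
  have IV: "INV (ci i) v" using inv vm v_def by simp
  have m: "m \<in> msgs n (CR (Suc i))" using msg_in vm m_def by blast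
  have stv: "st ms (Suc i) = CE (Suc i) m v" by (simp add: v_def m_def)
  have c1: "1 \<le> c" using cidx_ge1 apos c_def by auto
  consider "c \<le> t" | "t+\<alpha>+1 \<le> c \<and> c \<le> 2*t+\<alpha>" | "\<not> (1 \<le> c \<and> c \<le> t)" "\<not> (t+\<alpha>+1 \<le> c \<and> c \<le> 2*t+\<alpha>)" by linarith
  then show ?thesis
  proof cases
    case 1
    have vW: "v \<in> WB (c - 1)" using prev(1)[OF IV] 1 c1 c_def by blast
    have mR: "m \<in> msgs n (R c)" using m 1 c1 CR_A c_def by simp
    have "D c (E c m v) = m" using wom_step[OF c1 1 mR vW] by simp
    then show ?thesis using stv 1 c1 CE_A CD_A c_def m_def by simp
  next
    case 2
    define j where "j = c - t - \<alpha>"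
    have j1: "1 \<le> j" "j \<le> t" using 2 j_def by auto
    have vW: "map Not v \<in> WB (j - 1)" using prev(2)[OF IV] 2 c_def j_def by (simp add: diff_diff_add)
    have mR: "m \<in> msgs n (R j)" using m 2 j1 CR_B c_def j_def by simp
    have d: "D j (E j m (map Not v)) = m" using wom_step[OF j1 mR vW] by simp
    have "CE (Suc i) m v = map Not (E j m (map Not v))"
      using 2 CE_B c_def j_def by simp
    then show ?thesis using stv 2 d CD_B c_def j_def m_def by (simp add: comp_def)
  next
    case 3
    have "CR (Suc i) = 0" using CR_0 3 c_def by simp
    then have "m = 1" using m msgs_0 by simp
    then show ?thesis using CD_0 3 c_def m_def by simp
  qed
qed

lemma monoA: assumes "valid_msgs n CR ms" "p < n" "ci (Suc i) \<le> t+1" "st ms i ! p"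
  shows "st ms (Suc i) ! p"
proof -
  define v where "v = st ms i"
  define c where "c = ci (Suc i)"
  define m where "m = ms (Suc i)"
  have IV: "INV (ci i) v" using inv assms v_def by simp
  have m: "m \<in> msgs n (CR (Suc i))" using msg_in assms m_def by blast
  have stv: "st ms (Suc i) = CE (Suc i) m v" by (simp add: v_def m_def)
  have c1: "1 \<le> c" using cidx_ge1 apos c_def by auto
  show ?thesis
  proof (cases "c = t+1")
    case True
    then show ?thesis using stv CE_t1 c_def assms by simp
  next
    case False
    then have 1: "c \<le> t" using assms c_def by simp
    have vW: "v \<in> WB (c - 1)" using prev(1)[OF IV] 1 c1 c_def by blast
    have mR: "m \<in> msgs n (R c)" using m 1 c1 CR_A c_def by simp
    have la: "list_all2 (\<le>) v (E c m v)" using wom_step[OF c1 1 mR vW] by simp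
    have "length v = n" using st_len assms v_def by simp
    then have "v ! p \<le> E c m v ! p" using list_all2_nthD[OF la] assms by simp
    then show ?thesis using stv 1 c1 CE_A c_def assms v_def by simp
  qed
qed

lemma monoB: assumes "valid_msgs n CR ms" "p < n" "t+\<alpha>+1 \<le> ci (Suc i)" "ci (Suc i) \<le> 2*t+\<alpha>+1"
   "st ms (Suc i) ! p"
  shows "st ms i ! p"
proof -
  define v where "v = st ms i"
  define c where "c = ci (Suc i)"
  define m where "m = ms (Suc i)"
  have IV: "INV (ci i) v" using inv assms v_def by simp
  have m: "m \<in> msgs n (CR (Suc i))" using msg_in assms m_def by blast
  have stv: "st ms (Suc i) = CE (Suc i) m v" by (simp add: v_def m_def)
  show ?thesis
  proof (cases "c = 2*t+\<alpha>+1")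
    case True
    then show ?thesis using stv CE_z c_def assms by simp
  next
    case False
    then have 2: "t+\<alpha>+1 \<le> c \<and> c \<le> 2*t+\<alpha>" using assms c_def by simp
    define j where "j = c - t - \<alpha>"
    have j1: "1 \<le> j" "j \<le> t" using 2 j_def by auto
    have vW: "map Not v \<in> WB (j - 1)" using prev(2)[OF IV] 2 c_def j_def by (simp add: diff_diff_add)
    have mR: "m \<in> msgs n (R j)" using m 2 j1 CR_B c_def j_def by simp
    have la: "list_all2 (\<le>) (map Not v) (E j m (map Not v))" using wom_step[OF j1 mR vW] by simp
    have e: "st ms (Suc i) = map Not (E j m (map Not v))"
      using stv 2 CE_B c_def j_def by simp
    have lv: "length v = n" using st_len assms v_def by simp
    then have "map Not v ! p \<le> E j m (map Not v) ! p" using list_all2_nthD[OF la] assms by simp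
    moreover have "length (E j m (map Not v)) = n" using la lv list_all2_lengthD by fastforce
    ultimately show ?thesis using e assms v_def lv by auto
  qed
qed

lemma keep: "(t+2 \<le> ci (Suc i) \<and> ci (Suc i) \<le> t+\<alpha>) \<or> 2*t+\<alpha>+2 \<le> ci (Suc i) \<Longrightarrow> st ms (Suc i) = st ms i"
  using CE_keep by simp

end

context cons begin

lemma no_second:
  assumes vm: "valid_msgs n CR ms" and p: "p < n" and ch: "st ms i ! p \<noteq> st ms (Suc i) ! p"
    and d: "0 < d" "d < \<alpha>"
  shows "st ms (i+d) ! p = st ms (Suc (i+d)) ! p"
proof -
  define c where "c = ci (Suc i)"
  have c1: "1 \<le> c" using cidx_ge1 apos c_def by auto
  have cadd: "ci (Suc (Suc i + e)) = c + Suc e" if "c + Suc e \<le> 2*(t+\<alpha>)" for e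
    using cidx_add[OF apos, where t=t and i="Suc i" and d="Suc e"] that c_def by simp
  consider "c \<le> t+1" | "t+\<alpha>+1 \<le> c \<and> c \<le> 2*t+\<alpha>+1" | "(t+2 \<le> c \<and> c \<le> t+\<alpha>) \<or> 2*t+\<alpha>+2 \<le> c"
    by linarith
  then have all: "\<forall>e<\<alpha>. st ms (Suc i + e) ! p = st ms (Suc i) ! p"
  proof cases
    case 1
    have T: "st ms (Suc i) ! p" using monoA[OF vm p, of i] 1 ch c_def by auto
    have "st ms (Suc i + e) ! p" if "e < \<alpha>" for e
      using that
    proof (induction e)
      case 0 then show ?case using T by simp
    next
      case (Suc e)
      have ce: "ci (Suc (Suc i + e)) = c + Suc e" using cadd Suc.prems 1 by simp
      show ?case
      proof (cases "c + Suc e \<le> t+1")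
        case True
        then show ?thesis using monoA[OF vm p, of "Suc i + e"] ce Suc by simp
      next
        case False
        then have "st ms (Suc (Suc i + e)) = st ms (Suc i + e)" using keep[of "Suc i + e" ms] ce Suc.prems 1 by simp
        then show ?thesis using Suc by simp
      qed
    qed
    then show ?thesis using T by simp
  next
    case 2
    have F: "\<not> st ms (Suc i) ! p" using monoB[OF vm p, of i] 2 ch c_def by auto
    have "\<not> st ms (Suc i + e) ! p" if "e < \<alpha>" for e
      using that
    proof (induction e)
      case 0 then show ?case using F by simp
    next
      case (Suc e)
      have ce: "ci (Suc (Suc i + e)) = c + Suc e" using cadd Suc.prems 2 by simp
      show ?case
      proof (cases "c + Suc e \<le> 2*t+\<alpha>+1")
        case True
        have h1: "t+\<alpha>+1 \<le> ci (Suc (Suc i + e))" "ci (Suc (Suc i + e)) \<le> 2*t+\<alpha>+1" using ce 2 True by auto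
        have IH: "\<not> st ms (Suc i + e) ! p" using Suc.IH Suc.prems by linarith
        have "Suc i + Suc e = Suc (Suc i + e)" by simp
        then show ?thesis using monoB[OF vm p h1] IH by metis
      next
        case False
        then have "st ms (Suc (Suc i + e)) = st ms (Suc i + e)" using keep[of "Suc i + e" ms] ce by simp
        then show ?thesis using Suc by simp
      qed
    qed
    then show ?thesis using F by simp
  next
    case 3
    then have False using keep[of i ms] ch c_def by simp
    then show ?thesis by simp
  qed
  have e1: "st ms (Suc i + (d-1)) ! p = st ms (Suc i) ! p" using all[rule_format, of "d-1"] d by linarith
  have e2: "st ms (Suc i + d) ! p = st ms (Suc i) ! p" using all[rule_format, of "d"] d by linarith
  have x1: "Suc i + (d - 1) = i + d" and x2: "Suc i + d = Suc (i + d)" using d by auto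
  show ?thesis using e1 e2 unfolding x1 x2 by metis
qed

lemma constrained: "constrained_code n CR CE CD \<alpha> 1 1"
proof -
  have isc: "is_code n CR CE CD"
    unfolding is_code_def
  proof (intro conjI allI impI)
    fix i :: nat assume "1 \<le> i"
    show "0 \<le> CR i"
      by (cases "1 \<le> ci i \<and> ci i \<le> t"; cases "t+\<alpha>+1 \<le> ci i \<and> ci i \<le> 2*t+\<alpha>")
         (auto simp: CR_A CR_B CR_0 R_nonneg)
  next
    fix ms :: "nat \<Rightarrow> nat" and i :: nat assume vm: "valid_msgs n CR ms" and i: "1 \<le> i"
    show "length (st ms i) = n" using st_len vm by blast
    obtain i0 where "i = Suc i0" using i by (cases i) auto
    then show "CD i (st ms i) = ms i" using decode vm by simp
  qed
  have "card {(k, l). k < \<alpha> \<and> l < 1 \<and> st ms (i + k) ! (j + l - 1) \<noteq> st ms (i + k + 1) ! (j + l - 1)} \<le> 1"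
    if vm: "valid_msgs n CR ms" and j: "1 \<le> j \<and> j + 1 \<le> n + 1" for ms i j
  proof -
    define S where "S = {(k, l). k < \<alpha> \<and> l < (1::nat) \<and> st ms (i + k) ! (j + l - 1) \<noteq> st ms (i + k + 1) ! (j + l - 1)}"
    have fin: "finite S"
      by (rule finite_subset[of _ "{..<\<alpha>} \<times> {..<1}"]) (auto simp: S_def)
    have p: "j - 1 < n" using j by linarith
    have eq: "a = b" if a: "a \<in> S" and b: "b \<in> S" for a b
    proof -
      obtain k1 where a': "a = (k1, 0)" "k1 < \<alpha>" "st ms (i + k1) ! (j - 1) \<noteq> st ms (Suc (i + k1)) ! (j - 1)"
        using a unfolding S_def by auto
      obtain k2 where b': "b = (k2, 0)" "k2 < \<alpha>" "st ms (i + k2) ! (j - 1) \<noteq> st ms (Suc (i + k2)) ! (j - 1)"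
        using b unfolding S_def by auto
      have "\<not> k1 < k2"
      proof
        assume lt: "k1 < k2"
        have "st ms (i + k1 + (k2 - k1)) ! (j-1) = st ms (Suc (i + k1 + (k2 - k1))) ! (j-1)"
          using no_second[OF vm p a'(3), of "k2 - k1"] lt b'(2) by simp
        then show False using b'(3) lt by simp
      qed
      moreover have "\<not> k2 < k1"
      proof
        assume lt: "k2 < k1"
        have "st ms (i + k2 + (k1 - k2)) ! (j-1) = st ms (Suc (i + k2 + (k1 - k2))) ! (j-1)"
          using no_second[OF vm p b'(3), of "k1 - k2"] lt a'(2) by simp
        then show False using a'(3) lt by simp
      qed
      ultimately show ?thesis using a' b' by simp
    qed
    have "card S \<le> Suc 0" using card_le_Suc0_iff_eq[OF fin] eq by blast
    then show ?thesis unfolding S_def by simp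
  qed
  then show ?thesis using isc unfolding constrained_code_def by blast
qed

end

context cons begin

definition g :: "nat \<Rightarrow> real" where
  "g i = (if 1 \<le> i \<and> i \<le> t then R i else if t+\<alpha>+1 \<le> i \<and> i \<le> 2*t+\<alpha> then R (i-t-\<alpha>) else 0)"

lemma CR_period: "CR (i + 2*(t+\<alpha>)) = CR i"
  unfolding constr_R_def cidx_period by simp

lemma one_period: "(\<Sum>i=1..2*(t+\<alpha>). CR i) = 2 * sum_rate t R"
proof -
  have "(\<Sum>i=1..2*(t+\<alpha>). CR i) = (\<Sum>i=1..2*(t+\<alpha>). g i)"
    by (rule sum.cong) (auto simp: constr_R_def cidx_small g_def Let_def)
  also have "2*(t+\<alpha>) = t + (\<alpha> + (t + \<alpha>))" by simp
  also have "(\<Sum>i=1..t + (\<alpha> + (t + \<alpha>)). g i) = (\<Sum>i=1..t. g i) + (\<Sum>i=t+1..t + (\<alpha> + (t + \<alpha>)). g i)"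
    by (rule sum.ub_add_nat) simp
  also have "t + (\<alpha> + (t + \<alpha>)) = (t + \<alpha>) + (t + \<alpha>)" by simp
  also have "(\<Sum>i=t+1..(t + \<alpha>) + (t + \<alpha>). g i) = (\<Sum>i=t+1..t + \<alpha>. g i) + (\<Sum>i=t+\<alpha>+1..(t + \<alpha>) + (t + \<alpha>). g i)"
    by (rule sum.ub_add_nat) simp
  also have "(t + \<alpha>) + (t + \<alpha>) = (t + \<alpha> + t) + \<alpha>" by simp
  also have "(\<Sum>i=t+\<alpha>+1..(t + \<alpha> + t) + \<alpha>. g i) = (\<Sum>i=t+\<alpha>+1..t + \<alpha> + t. g i) + (\<Sum>i=t+\<alpha>+t+1..(t + \<alpha> + t) + \<alpha>. g i)"
    by (rule sum.ub_add_nat) simp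
  also have "(\<Sum>i=t+1..t + \<alpha>. g i) = 0"
    by (rule sum.neutral) (auto simp: g_def)
  also have "(\<Sum>i=t+\<alpha>+t+1..(t + \<alpha> + t) + \<alpha>. g i) = 0"
    by (rule sum.neutral) (auto simp: g_def)
  also have "(\<Sum>i=1..t. g i) = sum_rate t R"
    unfolding sum_rate_def by (rule sum.cong) (auto simp: g_def)
  also have "(\<Sum>i=t+\<alpha>+1..t + \<alpha> + t. g i) = (\<Sum>i=1+(t+\<alpha>)..t + (t+\<alpha>). g i)"
    by (simp add: ac_simps)
  also have "\<dots> = (\<Sum>i=1..t. g (i + (t+\<alpha>)))"
    by (rule sum.shift_bounds_cl_nat_ivl)
  also have "\<dots> = sum_rate t R"
    unfolding sum_rate_def by (rule sum.cong) (auto simp: g_def)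
  finally have X: "(\<Sum>i=1..t+\<alpha>+t+\<alpha>. CR i) = 2*sum_rate t R" by simp
  moreover have "2*(t+\<alpha>) = t+\<alpha>+t+\<alpha>" by simp
  ultimately show ?thesis by metis
qed

lemma shift_sum: "(\<Sum>i=1..m + 2*(t+\<alpha>). CR i) = (\<Sum>i=1..m. CR i) + 2 * sum_rate t R"
proof (induction m)
  case 0 then show ?case using one_period by simp
next
  case (Suc m)
  have "(\<Sum>i=1..Suc m + 2*(t+\<alpha>). CR i) = (\<Sum>i=1..m + 2*(t+\<alpha>). CR i) + CR (Suc m + 2*(t+\<alpha>))"
    by (simp add: sum.cl_ivl_Suc)
  also have "CR (Suc m + 2*(t+\<alpha>)) = CR (Suc m)" by (rule CR_period)
  finally show ?case using Suc by (simp add: sum.cl_ivl_Suc)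
qed

lemma rate: assumes "sum_rate t R = log 2 (real t + 1)"
  shows "code_rate CR (log 2 (real t + 1) / real (t + \<alpha>))"
proof -
  define P where "P = 2*(t+\<alpha>)"
  define L where "L = log 2 (real t + 1) / real (t + \<alpha>)"
  define e where "e m = (\<Sum>i=1..m. CR i) - real m * L" for m
  have ta: "real t + real \<alpha> > 0" using apos by simp
  have i1: "(real t + real \<alpha>) * (log 2 (real t + 1) / (real t + real \<alpha>)) = log 2 (real t + 1)"
    using ta by simp
  have rp: "real P = 2 * (real t + real \<alpha>)" by (simp add: P_def)
  have "real P * L = 2 * ((real t + real \<alpha>) * (log 2 (real t + 1) / (real t + real \<alpha>)))"
    unfolding rp L_def by (simp only: mult.assoc of_nat_add)
  then have PL: "2 * sum_rate t R = real P * L" using i1 assms by simp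
  have eP: "e (m + P) = e m" for m
    using shift_sum[of m] PL unfolding e_def P_def[symmetric] by (simp add: algebra_simps)
  have eq: "e (r + q * P) = e r" for q r
  proof (induction q)
    case 0 then show ?case by simp
  next
    case (Suc q)
    have "r + Suc q * P = (r + q * P) + P" by simp
    then show ?case using eP Suc by metis
  qed
  have Ppos: "0 < P" using apos P_def by simp
  define B where "B = (\<Sum>r<P. \<bar>e r\<bar>)"
  have bound: "\<bar>e m\<bar> \<le> B" for m
  proof -
    have "e m = e (m mod P)" using eq[of "m mod P" "m div P"] by simp
    moreover have "\<bar>e (m mod P)\<bar> \<le> B" unfolding B_def
      by (rule member_le_sum) (use Ppos in auto)
    ultimately show ?thesis by simp
  qed
  have z: "(\<lambda>m. e m / real m) \<longlonglongrightarrow> 0"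
  proof (rule tendsto_0_le[OF lim_1_over_n, where K=B])
    show "\<forall>\<^sub>F m in sequentially. norm (e m / real m) \<le> norm (1 / real m :: real) * B"
    proof (rule eventually_sequentiallyI[of 1])
      fix m :: nat assume "1 \<le> m"
      then show "norm (e m / real m) \<le> norm (1 / real m :: real) * B"
        using bound[of m] by (simp add: divide_simps abs_divide)
    qed
  qed
  then have "(\<lambda>m. L + e m / real m) \<longlonglongrightarrow> L + 0" by (intro tendsto_intros)
  then have lim: "(\<lambda>m. L + e m / real m) \<longlonglongrightarrow> L" by simp
  have ev: "\<forall>\<^sub>F m in sequentially. L + e m / real m = (\<Sum>i=1..m. CR i) / real m"
  proof (rule eventually_sequentiallyI[of 1])
    fix m :: nat assume "1 \<le> m"
    then show "L + e m / real m = (\<Sum>i=1..m. CR i) / real m"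
      unfolding e_def by (simp add: field_simps)
  qed
  show ?thesis unfolding code_rate_def L_def[symmetric]
    using Lim_transform_eventually[OF lim ev] by simp
qed

end

theorem theorem6:
  fixes \<alpha> t n :: nat
    and R :: "nat \<Rightarrow> real"
    and E :: "nat \<Rightarrow> nat \<Rightarrow> bool list \<Rightarrow> bool list"
    and D :: "nat \<Rightarrow> bool list \<Rightarrow> nat"
  assumes "0 < \<alpha>" and "0 < t" and "0 < n"
    and "wom_code n t R E D"
  shows "constrained_code n (constr_R t \<alpha> R) (constr_E n t \<alpha> E) (constr_D t \<alpha> D) \<alpha> 1 1
       \<and> (sum_rate t R = log 2 (real t + 1) \<longrightarrow>
            code_rate (constr_R t \<alpha> R) (log 2 (real t + 1) / real (t + \<alpha>)))"
proof -
  interpret cons \<alpha> t n R E D using assms by unfold_locales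
  show ?thesis using constrained rate by blast
qed


end
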